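(* Let $n\ge 4$ and let $x$ be a vertex of the path $P_n$ which is not a bad vertex (i.e. it is not the case that $n=5$ and $x$ is the middle vertex of $P_5$). Then there exists a $(P_n,x)$-good path 2-placement.
   Context: $P_n$ is the path on $n$ vertices; $dist$ is distance in $P_n$, $d(y)$ the degree of $y$ in $P_n$, $N(x)$ the set of neighbors of $x$. A permutation $\sigma$ of $V(P_n)$ is a 2-placement of $P_n$ if for every edge $ab$ of $P_n$, $\sigma(a)\sigma(b)$ is not an edge of $P_n$. $P_n^k$ is the $k$-th power of $P_n$; $\sigma(P_n)\subseteq P_n^k$ means $dist(\sigma(a),\sigma(b))\le k$ for every edge $ab$ of $P_n$. A fixed-point-free permutation $\sigma$ of $V(P_n)$ is a $(P_n,x)$-good path 2-placement if: (1) $\sigma$ is a 2-placement of $P_n$; (2) $\sigma(P_n)\subseteq P_n^5$; (3) $dist(x,\sigma(x))=1$; (4) $dist(y,\sigma(y))\le 2$ for every $y\in N(x)$ and for every $y$ with $d(y)=1$. *)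

theory Defs
  imports Main
begin

definition path_verts :: "nat \<Rightarrow> nat set" where
  "path_verts n = {1..n}"

definition path_edge :: "nat \<Rightarrow> nat \<Rightarrow> nat \<Rightarrow> bool" where
  "path_edge n a b \<longleftrightarrow> a \<in> path_verts n \<and> b \<in> path_verts n \<and> (a = b + 1 \<or> b = a + 1)"

definition path_dist :: "nat \<Rightarrow> nat \<Rightarrow> nat" where
  "path_dist a b = (if a \<le> b then b - a else a - b)"

definition path_nbrs :: "nat \<Rightarrow> nat \<Rightarrow> nat set" where
  "path_nbrs n x = {y. path_edge n x y}"

definition path_deg :: "nat \<Rightarrow> nat \<Rightarrow> nat" where
  "path_deg n y = card (path_nbrs n y)"

definition is_perm_path :: "nat \<Rightarrow> (nat \<Rightarrow> nat) \<Rightarrow> bool" where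
  "is_perm_path n \<sigma> \<longleftrightarrow> bij_betw \<sigma> (path_verts n) (path_verts n)"

definition two_placement :: "nat \<Rightarrow> (nat \<Rightarrow> nat) \<Rightarrow> bool" where
  "two_placement n \<sigma> \<longleftrightarrow> is_perm_path n \<sigma> \<and>
     (\<forall>a b. path_edge n a b \<longrightarrow> \<not> path_edge n (\<sigma> a) (\<sigma> b))"

definition in_path_power :: "nat \<Rightarrow> nat \<Rightarrow> (nat \<Rightarrow> nat) \<Rightarrow> bool" where
  "in_path_power n k \<sigma> \<longleftrightarrow> (\<forall>a b. path_edge n a b \<longrightarrow> path_dist (\<sigma> a) (\<sigma> b) \<le> k)"

definition good_path_2placement :: "nat \<Rightarrow> nat \<Rightarrow> (nat \<Rightarrow> nat) \<Rightarrow> bool" where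
  "good_path_2placement n x \<sigma> \<longleftrightarrow>
     is_perm_path n \<sigma> \<and>
     (\<forall>v\<in>path_verts n. \<sigma> v \<noteq> v) \<and>
     two_placement n \<sigma> \<and>
     in_path_power n 5 \<sigma> \<and>
     path_dist x (\<sigma> x) = 1 \<and>
     (\<forall>y\<in>path_verts n. (y \<in> path_nbrs n x \<or> path_deg n y = 1) \<longrightarrow> path_dist y (\<sigma> y) \<le> 2)"

definition bad_vertex :: "nat \<Rightarrow> nat \<Rightarrow> bool" where
  "bad_vertex n x \<longleftrightarrow> n = 5 \<and> x = 3"

end

theory Submission
  imports Defs
begin

definition G :: "nat \<Rightarrow> nat \<Rightarrow> (nat \<Rightarrow> nat) \<Rightarrow> bool" where
"G n x \<sigma> \<longleftrightarrow> bij_betw \<sigma> {1..n} {1..n} \<and> (\<forall>i. 1\<le>i \<and> i\<le>n \<longrightarrow> \<sigma> i \<noteq> i) \<and>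
  (\<forall>i. 1\<le>i \<and> i<n \<longrightarrow> 2 \<le> path_dist (\<sigma> i) (\<sigma> (Suc i)) \<and> path_dist (\<sigma> i) (\<sigma> (Suc i)) \<le> 5) \<and>
  path_dist x (\<sigma> x) = 1 \<and> path_dist 1 (\<sigma> 1) \<le> 2 \<and> path_dist n (\<sigma> n) \<le> 2 \<and>
  (2 \<le> x \<longrightarrow> path_dist (x-1) (\<sigma> (x-1)) \<le> 2) \<and> (x < n \<longrightarrow> path_dist (Suc x) (\<sigma> (Suc x)) \<le> 2)"

lemma G_E:
  assumes "G n x \<sigma>"
  shows "bij_betw \<sigma> {1..n} {1..n}" "\<And>i. 1\<le>i \<Longrightarrow> i\<le>n \<Longrightarrow> \<sigma> i \<noteq> i"
    "\<And>i. 1\<le>i \<Longrightarrow> i<n \<Longrightarrow> 2 \<le> path_dist (\<sigma> i) (\<sigma> (Suc i))"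
    "\<And>i. 1\<le>i \<Longrightarrow> i<n \<Longrightarrow> path_dist (\<sigma> i) (\<sigma> (Suc i)) \<le> 5"
    "path_dist x (\<sigma> x) = 1" "path_dist 1 (\<sigma> 1) \<le> 2" "path_dist n (\<sigma> n) \<le> 2"
    "2 \<le> x \<Longrightarrow> path_dist (x-1) (\<sigma> (x-1)) \<le> 2" "x < n \<Longrightarrow> path_dist (Suc x) (\<sigma> (Suc x)) \<le> 2"
  using assms unfolding G_def by blast+

lemma deg_end:
  assumes "2 \<le> n" "y \<in> {1..n}" "path_deg n y = 1" shows "y = 1 \<or> y = n"
proof (rule ccontr)
  assume "\<not> (y = 1 \<or> y = n)"
  then have "1 < y" "y < n" using assms by auto
  then have "path_nbrs n y = {y-1, Suc y}"
    by (auto simp: path_nbrs_def path_edge_def path_verts_def)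
  then have "path_deg n y = 2" using \<open>1 < y\<close> by (simp add: path_deg_def)
  then show False using assms by simp
qed

lemma G_good:
  assumes "n \<ge> 4" "x \<in> path_verts n" "G n x \<sigma>"
  shows "good_path_2placement n x \<sigma>"
proof -
  note g = G_E[OF assms(3)]
  have bij: "is_perm_path n \<sigma>" using g(1) by (simp add: is_perm_path_def path_verts_def)
  have cons: "2 \<le> path_dist (\<sigma> a) (\<sigma> b) \<and> path_dist (\<sigma> a) (\<sigma> b) \<le> 5" if "path_edge n a b" for a b
  proof -
    from that have "a = Suc b \<and> 1 \<le> b \<and> b < n \<or> b = Suc a \<and> 1 \<le> a \<and> a < n"
      by (auto simp: path_edge_def path_verts_def)
    moreover have "path_dist u v = path_dist v u" for u v by (simp add: path_dist_def)
    ultimately show ?thesis using g(3)[of a] g(4)[of a] g(3)[of b] g(4)[of b] by metis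
  qed
  have tp: "two_placement n \<sigma>"
  proof -
    have "path_dist u v = 1" if "path_edge n u v" for u v
      using that by (auto simp: path_edge_def path_dist_def)
    then show ?thesis unfolding two_placement_def using bij cons by fastforce
  qed
  have pp: "in_path_power n 5 \<sigma>" unfolding in_path_power_def using cons by blast
  have ff: "\<forall>v\<in>path_verts n. \<sigma> v \<noteq> v" using g(2) by (auto simp: path_verts_def)
  have last: "path_dist y (\<sigma> y) \<le> 2" if "y \<in> path_verts n" "y \<in> path_nbrs n x \<or> path_deg n y = 1" for y
  proof -
    from that(2) show ?thesis
    proof
      assume "y \<in> path_nbrs n x"
      then have "y = x - 1 \<and> 2 \<le> x \<or> y = Suc x \<and> x < n"
        by (auto simp: path_nbrs_def path_edge_def path_verts_def)
      then show ?thesis using g(8,9) by auto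
    next
      assume "path_deg n y = 1"
      then have "y = 1 \<or> y = n" using deg_end[of n y] that(1) assms(1) by (auto simp: path_verts_def)
      then show ?thesis using g(6,7) by auto
    qed
  qed
  show ?thesis unfolding good_path_2placement_def using bij ff tp pp g(5) last by blast
qed

definition ex4 :: "nat \<Rightarrow> (nat \<Rightarrow> nat) \<Rightarrow> nat \<Rightarrow> nat" where
"ex4 n \<sigma> i = (if i \<le> n then \<sigma> i else if i = n+1 then n+2 else if i = n+2 then n+4
   else if i = n+3 then n+1 else n+3)"

lemma blk: "bij_betw (ex4 n \<sigma>) {Suc n..n+4} {Suc n..n+4}"
proof -
  have e: "{Suc n..n+4} = {n+1,n+2,n+3,n+4}" by auto
  show ?thesis unfolding e bij_betw_def by (auto simp: ex4_def)
qed

lemma G_ext: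
  assumes "G n x \<sigma>" "1 \<le> x" "x \<le> n" "n \<ge> 4"
  shows "G (n+4) x (ex4 n \<sigma>)"
proof -
  note g = G_E[OF assms(1)]
  have b1: "bij_betw (ex4 n \<sigma>) {1..n} {1..n}"
    using g(1) by (subst bij_betw_cong[where g=\<sigma>]) (auto simp: ex4_def)
  have "bij_betw (ex4 n \<sigma>) ({1..n} \<union> {Suc n..n+4}) ({1..n} \<union> {Suc n..n+4})"
    by (rule bij_betw_combine[OF b1 blk]) auto
  moreover have "{1..n} \<union> {Suc n..n+4} = {1..n+4}" by auto
  ultimately have bij: "bij_betw (ex4 n \<sigma>) {1..n+4} {1..n+4}" by simp
  have sn: "\<sigma> n \<in> {1..n}" using g(1) assms(4) bij_betw_apply[of \<sigma> "{1..n}" "{1..n}" n] by auto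
  have sn2: "\<sigma> n \<noteq> n" using g(2) assms(4) by auto
  have lo: "ex4 n \<sigma> i = \<sigma> i" if "i \<le> n" for i using that by (simp add: ex4_def)
  have pn: "path_dist n (\<sigma> n) \<le> 2" using g(7) by blast
  have sn3: "n - 2 \<le> \<sigma> n \<and> \<sigma> n < n" using sn sn2 pn by (auto simp: path_dist_def split: if_splits)
  have v1: "ex4 n \<sigma> (n+1) = n+2" "ex4 n \<sigma> (n+2) = n+4" "ex4 n \<sigma> (n+3) = n+1" "ex4 n \<sigma> (n+4) = n+3"
    by (auto simp: ex4_def)
  have cons: "2 \<le> path_dist (ex4 n \<sigma> i) (ex4 n \<sigma> (Suc i)) \<and> path_dist (ex4 n \<sigma> i) (ex4 n \<sigma> (Suc i)) \<le> 5"
    if "1 \<le> i" "i < n+4" for i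
  proof -
    have "i < n \<or> i = n \<or> i = n+1 \<or> i = n+2 \<or> i = n+3" using that by linarith
    then consider "i < n" | "i = n" | "i = n+1" | "i = n+2" | "i = n+3" by blast
    then show ?thesis
    proof cases
      case 1
      then have "ex4 n \<sigma> i = \<sigma> i" "ex4 n \<sigma> (Suc i) = \<sigma> (Suc i)" using lo by auto
      moreover have "2 \<le> path_dist (\<sigma> i) (\<sigma> (Suc i)) \<and> path_dist (\<sigma> i) (\<sigma> (Suc i)) \<le> 5"
        using g(3,4) that 1 by blast
      ultimately show ?thesis by simp
    next
      case 2
      then have "ex4 n \<sigma> i = \<sigma> n" "ex4 n \<sigma> (Suc i) = n+2" using lo v1 by auto
      then show ?thesis using sn3 assms(4) by (simp add: path_dist_def, arith)
    next
      case 3 then show ?thesis by (simp add: path_dist_def ex4_def)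
    next
      case 4 then show ?thesis by (simp add: path_dist_def ex4_def)
    next
      case 5 then show ?thesis by (simp add: path_dist_def ex4_def)
    qed
  qed
  have ff: "\<forall>i. 1\<le>i \<and> i\<le>n+4 \<longrightarrow> ex4 n \<sigma> i \<noteq> i"
  proof (intro allI impI)
    fix i assume i: "1\<le>i \<and> i\<le>n+4"
    show "ex4 n \<sigma> i \<noteq> i"
    proof (cases "i \<le> n")
      case True then show ?thesis using lo g(2) i by auto
    qed (auto simp: ex4_def)
  qed
  have e1: "path_dist x (ex4 n \<sigma> x) = 1" using lo[of x] g(5) assms by simp
  have e2: "path_dist 1 (ex4 n \<sigma> 1) \<le> 2" using lo[of 1] g(6) assms by simp
  have e3: "path_dist (n+4) (ex4 n \<sigma> (n+4)) \<le> 2" using v1 by (simp add: path_dist_def)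
  have e4: "2 \<le> x \<longrightarrow> path_dist (x-1) (ex4 n \<sigma> (x-1)) \<le> 2" using lo[of "x-1"] g(8) assms by simp
  have e5: "x < n+4 \<longrightarrow> path_dist (Suc x) (ex4 n \<sigma> (Suc x)) \<le> 2"
  proof (cases "x < n")
    case True then show ?thesis using lo[of "Suc x"] g(9) by simp
  next
    case False then have "x = n" using assms by simp
    then show ?thesis using v1 by (simp add: path_dist_def)
  qed
  show ?thesis unfolding G_def using bij cons ff e1 e2 e3 e4 e5 by (intro conjI) blast+
qed

definition rf :: "nat \<Rightarrow> (nat \<Rightarrow> nat) \<Rightarrow> nat \<Rightarrow> nat" where
"rf n \<sigma> i = n + 1 - \<sigma> (n + 1 - i)"

lemma r_bij: "bij_betw (\<lambda>i. n + 1 - i) {1..n} {1..(n::nat)}"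
  unfolding bij_betw_def inj_on_def
proof safe
  fix y assume "y \<in> {1..n}"
  then show "y \<in> (\<lambda>i. n + 1 - i) ` {1..n}" by (intro image_eqI[of _ _ "n+1-y"]) auto
qed auto

lemma pd_refl: "a \<le> n \<Longrightarrow> b \<le> n \<Longrightarrow> path_dist (n+1-a) (n+1-b) = path_dist a b"
  by (auto simp: path_dist_def)

lemma G_refl:
  assumes "G n x \<sigma>" "1 \<le> x" "x \<le> n" "n \<ge> 4"
  shows "G n (n+1-x) (rf n \<sigma>)"
proof -
  note g = G_E[OF assms(1)]
  have bij: "bij_betw (rf n \<sigma>) {1..n} {1..n}"
  proof -
    have "bij_betw ((\<lambda>i. n + 1 - i) \<circ> \<sigma> \<circ> (\<lambda>i. n + 1 - i)) {1..n} {1..n}"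
      using g(1) r_bij by (metis bij_betw_trans)
    then show ?thesis by (simp add: rf_def[abs_def] comp_def)
  qed
  have rng: "\<sigma> i \<in> {1..n}" if "i \<in> {1..n}" for i using g(1) that bij_betw_apply[of \<sigma> "{1..n}" "{1..n}" i] by auto
  have pdr: "path_dist i (rf n \<sigma> i) = path_dist (n+1-i) (\<sigma> (n+1-i))" if "i \<in> {1..n}" for i
  proof -
    have "n+1-i \<in> {1..n}" using that by auto
    then have "\<sigma> (n+1-i) \<in> {1..n}" by (rule rng)
    moreover have "i = n+1-(n+1-i)" using that by auto
    ultimately have "path_dist (n+1-(n+1-i)) (n+1 - \<sigma> (n+1-i)) = path_dist (n+1-i) (\<sigma> (n+1-i))"
      using pd_refl[of "n+1-i" n "\<sigma> (n+1-i)"] that by auto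
    then show ?thesis using \<open>i = n+1-(n+1-i)\<close> unfolding rf_def by metis
  qed
  have ff: "rf n \<sigma> i \<noteq> i" if "1 \<le> i" "i \<le> n" for i
  proof -
    have "n+1-i \<in> {1..n}" using that by auto
    then have "\<sigma> (n+1-i) \<in> {1..n}" "\<sigma> (n+1-i) \<noteq> n+1-i" using g(2)[of "n+1-i"] rng[of "n+1-i"] by auto
    then show ?thesis using that by (auto simp: rf_def)
  qed
  have cons: "2 \<le> path_dist (rf n \<sigma> i) (rf n \<sigma> (Suc i)) \<and> path_dist (rf n \<sigma> i) (rf n \<sigma> (Suc i)) \<le> 5"
    if "1 \<le> i" "i < n" for i
  proof -
    define j where "j = n - i"
    have j: "1 \<le> j" "j < n" "n + 1 - i = Suc j" "n + 1 - Suc i = j" using that by (auto simp: j_def)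
    have "path_dist (rf n \<sigma> i) (rf n \<sigma> (Suc i)) = path_dist (\<sigma> (Suc j)) (\<sigma> j)"
      unfolding rf_def j(3,4) using rng[of j] rng[of "Suc j"] j by (intro pd_refl) auto
    also have "\<dots> = path_dist (\<sigma> j) (\<sigma> (Suc j))" by (auto simp: path_dist_def)
    finally show ?thesis using g(3,4) j by auto
  qed
  have pdr2: "path_dist i (rf n \<sigma> i) = path_dist k (\<sigma> k)" if "i \<in> {1..n}" "k = n+1-i" for i k
    using pdr[OF that(1)] that(2) by simp
  have m1: "n+1-x \<in> {1..n}" "1 \<in> {1..n}" "n \<in> {1..n}" using assms by auto
  have e1: "path_dist (n+1-x) (rf n \<sigma> (n+1-x)) = 1"
    using pdr2[OF m1(1), of x] assms(2,3) g(5) by simp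
  have e2: "path_dist 1 (rf n \<sigma> 1) \<le> 2" using pdr2[OF m1(2), of n] g(7) by simp
  have e3: "path_dist n (rf n \<sigma> n) \<le> 2" using pdr2[OF m1(3), of 1] g(6) by simp
  have e4: "path_dist (n+1-x-1) (rf n \<sigma> (n+1-x-1)) \<le> 2" if "2 \<le> n+1-x"
  proof -
    have h: "n+1-x-1 \<in> {1..n}" "Suc x = n+1-(n+1-x-1)" "x < n" using that assms by auto
    have "path_dist (n+1-x-1) (rf n \<sigma> (n+1-x-1)) = path_dist (Suc x) (\<sigma> (Suc x))"
      by (rule pdr2[OF h(1,2)])
    then show ?thesis using g(9)[OF h(3)] by simp
  qed
  have e5: "path_dist (Suc (n+1-x)) (rf n \<sigma> (Suc (n+1-x))) \<le> 2" if "n+1-x < n"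
  proof -
    have h: "Suc (n+1-x) \<in> {1..n}" "x-1 = n+1-Suc (n+1-x)" "2 \<le> x" using that assms by auto
    have "path_dist (Suc (n+1-x)) (rf n \<sigma> (Suc (n+1-x))) = path_dist (x-1) (\<sigma> (x-1))"
      by (rule pdr2[OF h(1,2)])
    then show ?thesis using g(8)[OF h(3)] by simp
  qed
  show ?thesis unfolding G_def using bij ff cons e1 e2 e3 e4 e5 by (intro conjI) blast+
qed

lemma G_list:
  assumes "length l = n" "distinct l" "set l = {1..n}"
    "list_all (\<lambda>i. l!(i-1) \<noteq> i) [1..<n+1]"
    "list_all (\<lambda>i. 2 \<le> path_dist (l!(i-1)) (l!i) \<and> path_dist (l!(i-1)) (l!i) \<le> 5) [1..<n]"
    "path_dist x (l!(x-1)) = 1" "path_dist 1 (l!0) \<le> 2" "path_dist n (l!(n-1)) \<le> 2"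
    "2 \<le> x \<longrightarrow> path_dist (x-1) (l!(x-2)) \<le> 2" "x < n \<longrightarrow> path_dist (Suc x) (l!x) \<le> 2"
  shows "G n x (\<lambda>i. l!(i-1))"
proof -
  have inj: "inj_on (\<lambda>i. l!(i-1)) {1..n}"
  proof (rule inj_onI)
    fix i j assume "i \<in> {1..n}" "j \<in> {1..n}" "l!(i-1) = l!(j-1)"
    then have "i - 1 = j - 1" using assms(1,2) nth_eq_iff_index_eq by fastforce
    then show "i = j" using \<open>i \<in> {1..n}\<close> \<open>j \<in> {1..n}\<close> by auto
  qed
  have img: "(\<lambda>i. l!(i-1)) ` {1..n} = {1..n}"
  proof -
    have "(\<lambda>i. l!(i-1)) ` {1..n} = set l"
    proof safe
      fix i assume "i \<in> {1..n}" then show "l!(i-1) \<in> set l" using assms(1) by auto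
    next
      fix v assume "v \<in> set l"
      then obtain k where "k < n" "v = l!k" using assms(1) by (auto simp: in_set_conv_nth)
      then show "v \<in> (\<lambda>i. l!(i-1)) ` {1..n}" by (intro image_eqI[of _ _ "Suc k"]) auto
    qed
    then show ?thesis using assms(3) by simp
  qed
  have ff: "\<forall>i. 1\<le>i \<and> i\<le>n \<longrightarrow> l!(i-1) \<noteq> i" using assms(4) by (auto simp: list_all_iff)
  have cs: "\<forall>i. 1\<le>i \<and> i<n \<longrightarrow> 2 \<le> path_dist (l!(i-1)) (l!(Suc i - 1)) \<and> path_dist (l!(i-1)) (l!(Suc i - 1)) \<le> 5"
    using assms(5) by (auto simp: list_all_iff)
  have x2: "2 \<le> x \<longrightarrow> path_dist (x-1) (l!(x-1-1)) \<le> 2" using assms(9) by (simp add: numeral_2_eq_2)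
  show ?thesis unfolding G_def bij_betw_def using inj img ff cs assms(6-8,10) x2 by simp
qed

lemma G_shift:
  assumes "G m y \<sigma>" "1 \<le> y" "y \<le> m" "m \<ge> 4"
  shows "\<exists>\<tau>. G (m+4) (y+4) \<tau>"
proof -
  have "G m (m+1-y) (rf m \<sigma>)" by (rule G_refl[OF assms])
  then have "G (m+4) (m+1-y) (ex4 m (rf m \<sigma>))" using assms by (intro G_ext) auto
  then have "G (m+4) (m+4+1-(m+1-y)) (rf (m+4) (ex4 m (rf m \<sigma>)))" using assms by (intro G_refl) auto
  moreover have "m+4+1-(m+1-y) = y+4" using assms by auto
  ultimately show ?thesis by metis
qed

lemma B_4_1: "\<exists>\<sigma>. G 4 1 \<sigma>"
  by (rule exI, rule G_list[of "[2, 4, 1, 3]"]) code_simp+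

lemma B_4_2: "\<exists>\<sigma>. G 4 2 \<sigma>"
  by (rule exI, rule G_list[of "[3, 1, 4, 2]"]) code_simp+

lemma B_4_3: "\<exists>\<sigma>. G 4 3 \<sigma>"
  by (rule exI, rule G_list[of "[3, 1, 4, 2]"]) code_simp+

lemma B_4_4: "\<exists>\<sigma>. G 4 4 \<sigma>"
  by (rule exI, rule G_list[of "[2, 4, 1, 3]"]) code_simp+

lemma B_5_1: "\<exists>\<sigma>. G 5 1 \<sigma>"
  by (rule exI, rule G_list[of "[2, 4, 1, 5, 3]"]) code_simp+

lemma B_5_2: "\<exists>\<sigma>. G 5 2 \<sigma>"
  by (rule exI, rule G_list[of "[3, 1, 5, 2, 4]"]) code_simp+

lemma B_5_4: "\<exists>\<sigma>. G 5 4 \<sigma>"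
  by (rule exI, rule G_list[of "[2, 4, 1, 5, 3]"]) code_simp+

lemma B_5_5: "\<exists>\<sigma>. G 5 5 \<sigma>"
  by (rule exI, rule G_list[of "[3, 1, 5, 2, 4]"]) code_simp+

lemma B_6_1: "\<exists>\<sigma>. G 6 1 \<sigma>"
  by (rule exI, rule G_list[of "[2, 4, 1, 6, 3, 5]"]) code_simp+

lemma B_6_2: "\<exists>\<sigma>. G 6 2 \<sigma>"
  by (rule exI, rule G_list[of "[3, 1, 4, 6, 2, 5]"]) code_simp+

lemma B_6_3: "\<exists>\<sigma>. G 6 3 \<sigma>"
  by (rule exI, rule G_list[of "[3, 1, 4, 6, 2, 5]"]) code_simp+

lemma B_6_4: "\<exists>\<sigma>. G 6 4 \<sigma>"
  by (rule exI, rule G_list[of "[2, 5, 1, 3, 6, 4]"]) code_simp+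

lemma B_6_5: "\<exists>\<sigma>. G 6 5 \<sigma>"
  by (rule exI, rule G_list[of "[2, 5, 1, 3, 6, 4]"]) code_simp+

lemma B_6_6: "\<exists>\<sigma>. G 6 6 \<sigma>"
  by (rule exI, rule G_list[of "[2, 4, 1, 6, 3, 5]"]) code_simp+

lemma B_7_1: "\<exists>\<sigma>. G 7 1 \<sigma>"
  by (rule exI, rule G_list[of "[2, 4, 1, 5, 7, 3, 6]"]) code_simp+

lemma B_7_2: "\<exists>\<sigma>. G 7 2 \<sigma>"
  by (rule exI, rule G_list[of "[3, 1, 4, 6, 2, 7, 5]"]) code_simp+

lemma B_7_3: "\<exists>\<sigma>. G 7 3 \<sigma>"
  by (rule exI, rule G_list[of "[3, 1, 4, 6, 2, 7, 5]"]) code_simp+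

lemma B_7_4: "\<exists>\<sigma>. G 7 4 \<sigma>"
  by (rule exI, rule G_list[of "[2, 4, 1, 5, 7, 3, 6]"]) code_simp+

lemma B_7_5: "\<exists>\<sigma>. G 7 5 \<sigma>"
  by (rule exI, rule G_list[of "[3, 1, 6, 2, 4, 7, 5]"]) code_simp+

lemma B_7_6: "\<exists>\<sigma>. G 7 6 \<sigma>"
  by (rule exI, rule G_list[of "[2, 4, 1, 6, 3, 7, 5]"]) code_simp+

lemma B_7_7: "\<exists>\<sigma>. G 7 7 \<sigma>"
  by (rule exI, rule G_list[of "[2, 5, 1, 3, 7, 4, 6]"]) code_simp+

lemma B_9_3: "\<exists>\<sigma>. G 9 3 \<sigma>"
  by (rule exI, rule G_list[of "[3, 1, 4, 2, 6, 8, 5, 9, 7]"]) code_simp+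

lemma B_9_7: "\<exists>\<sigma>. G 9 7 \<sigma>"
  by (rule exI, rule G_list[of "[2, 4, 1, 5, 3, 8, 6, 9, 7]"]) code_simp+

lemma main: "4 \<le> n \<Longrightarrow> 1 \<le> x \<Longrightarrow> x \<le> n \<Longrightarrow> \<not> (n = 5 \<and> x = 3) \<Longrightarrow> \<exists>\<sigma>. G n x \<sigma>"
proof (induction n arbitrary: x rule: less_induct)
  case (less n)
  show ?case
  proof (cases "n \<le> 7 \<or> (n = 9 \<and> (x = 3 \<or> x = 7))")
    case True
    then consider "n = 4" | "n = 5" | "n = 6" | "n = 7" | "n = 9 \<and> (x = 3 \<or> x = 7)" using less.prems by linarith
    then show ?thesis
    proof cases
      case 1
      then have "x = 1 \<or> x = 2 \<or> x = 3 \<or> x = 4" using less.prems by linarith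
      then show ?thesis using 1 B_4_1 B_4_2 B_4_3 B_4_4 by (elim disjE) simp_all
    next
      case 2
      then have "x = 1 \<or> x = 2 \<or> x = 4 \<or> x = 5" using less.prems by linarith
      then show ?thesis using 2 B_5_1 B_5_2 B_5_4 B_5_5 by (elim disjE) simp_all
    next
      case 3
      then have "x = 1 \<or> x = 2 \<or> x = 3 \<or> x = 4 \<or> x = 5 \<or> x = 6" using less.prems by linarith
      then show ?thesis using 3 B_6_1 B_6_2 B_6_3 B_6_4 B_6_5 B_6_6 by (elim disjE) simp_all
    next
      case 4
      then have "x = 1 \<or> x = 2 \<or> x = 3 \<or> x = 4 \<or> x = 5 \<or> x = 6 \<or> x = 7" using less.prems by linarith
      then show ?thesis using 4 B_7_1 B_7_2 B_7_3 B_7_4 B_7_5 B_7_6 B_7_7 by (elim disjE) simp_all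
    next
      case 5
      then show ?thesis using B_9_3 B_9_7 by (elim conjE disjE) simp_all
    qed
  next
    case False
    then have n8: "n \<ge> 8" using less.prems by auto
    have nn: "n - 4 + 4 = n" using n8 by simp
    show ?thesis
    proof (cases "x \<le> n - 4")
      case True
      have "\<not> (n - 4 = 5 \<and> x = 3)" using False by auto
      moreover have "n - 4 < n" "4 \<le> n - 4" using n8 by auto
      ultimately obtain \<sigma> where "G (n-4) x \<sigma>" using less.IH[of "n-4" x] less.prems True by blast
      then have "G (n-4+4) x (ex4 (n-4) \<sigma>)" using True less.prems n8 by (intro G_ext) auto
      then show ?thesis unfolding nn by blast
    next
      case c2: False
      have "\<not> (n - 4 = 5 \<and> x - 4 = 3)" using False by auto
      moreover have "n - 4 < n" "4 \<le> n - 4" "1 \<le> x - 4" "x - 4 \<le> n - 4" using n8 c2 less.prems by auto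
      ultimately obtain \<sigma> where s: "G (n-4) (x-4) \<sigma>" using less.IH[of "n-4" "x-4"] by blast
      have "x - 4 + 4 = x" using c2 n8 by simp
      then show ?thesis using G_shift[OF s] \<open>1 \<le> x - 4\<close> \<open>x - 4 \<le> n - 4\<close> \<open>4 \<le> n - 4\<close> nn by metis
    qed
  qed
qed

theorem theorem3p2:
  fixes n x :: nat
  assumes "n \<ge> 4" and "x \<in> path_verts n" and "\<not> bad_vertex n x"
  shows "\<exists>\<sigma>. good_path_2placement n x \<sigma>"
proof -
  obtain \<sigma> where "G n x \<sigma>" using main[of n x] assms by (auto simp: path_verts_def bad_vertex_def)
  then show ?thesis using G_good assms by blast
qed

end
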